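(* Let $D$ be a positive integer and $G$ a connected graph of maximum degree at most $D$. Then for every set $S$ of $n$ vertices of $G$, there exist at least $\lceil (n-1)/D\rceil$ pairwise vertex-disjoint paths in $G$, each having two distinct endpoints, both of which belong to $S$. *)

theory Defs
  imports Complex_Main
begin

definition graph :: "'a set \<Rightarrow> ('a \<Rightarrow> 'a \<Rightarrow> bool) \<Rightarrow> bool" where
  "graph V E \<longleftrightarrow> finite V \<and> (\<forall>u v. E u v \<longrightarrow> u \<in> V \<and> v \<in> V) \<and>
     (\<forall>u v. E u v \<longrightarrow> E v u) \<and> (\<forall>v. \<not> E v v)"

definition degree :: "'a set \<Rightarrow> ('a \<Rightarrow> 'a \<Rightarrow> bool) \<Rightarrow> 'a \<Rightarrow> nat" where
  "degree V E v = card {w \<in> V. E v w}"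

definition walk :: "'a set \<Rightarrow> ('a \<Rightarrow> 'a \<Rightarrow> bool) \<Rightarrow> 'a list \<Rightarrow> bool" where
  "walk V E p \<longleftrightarrow> p \<noteq> [] \<and> set p \<subseteq> V \<and> (\<forall>i. Suc i < length p \<longrightarrow> E (p ! i) (p ! Suc i))"

definition path :: "'a set \<Rightarrow> ('a \<Rightarrow> 'a \<Rightarrow> bool) \<Rightarrow> 'a list \<Rightarrow> bool" where
  "path V E p \<longleftrightarrow> walk V E p \<and> distinct p"

definition connected_graph :: "'a set \<Rightarrow> ('a \<Rightarrow> 'a \<Rightarrow> bool) \<Rightarrow> bool" where
  "connected_graph V E \<longleftrightarrow> graph V E \<and> V \<noteq> {} \<and>
     (\<forall>u\<in>V. \<forall>v\<in>V. \<exists>p. walk V E p \<and> hd p = u \<and> last p = v)"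

end

theory Submission
  imports Defs
begin


definition rel_in :: "'a set \<Rightarrow> ('a \<Rightarrow> 'a \<Rightarrow> bool) \<Rightarrow> 'a \<Rightarrow> 'a \<Rightarrow> bool" where
  "rel_in A E a b \<longleftrightarrow> a \<in> A \<and> b \<in> A \<and> E a b"

definition pdisj :: "'a list list \<Rightarrow> bool" where
  "pdisj Ps \<longleftrightarrow> (\<forall>i<length Ps. \<forall>j<length Ps. i \<noteq> j \<longrightarrow> set (Ps!i) \<inter> set (Ps!j) = {})"

definition goodp :: "'a set \<Rightarrow> ('a \<Rightarrow> 'a \<Rightarrow> bool) \<Rightarrow> 'a set \<Rightarrow> 'a list \<Rightarrow> bool" where
  "goodp V E S p \<longleftrightarrow> path V E p \<and> hd p \<noteq> last p \<and> hd p \<in> S \<and> last p \<in> S"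

lemma disj_Cons:
  assumes "pdisj Ps" "\<forall>q\<in>set Ps. set p \<inter> set q = {}"
  shows "pdisj (p # Ps)"
  unfolding pdisj_def
proof (intro allI impI)
  fix i j assume i: "i < length (p#Ps)" and j: "j < length (p#Ps)" and ij: "i \<noteq> j"
  show "set ((p#Ps)!i) \<inter> set ((p#Ps)!j) = {}"
  proof (cases i)
    case 0
    then obtain j' where "j = Suc j'" using ij by (cases j) auto
    then show ?thesis using 0 assms(2) j by auto
  next
    case (Suc i')
    show ?thesis
    proof (cases j)
      case 0
      then show ?thesis using Suc assms(2) i by auto
    next
      case (Suc j')
      then show ?thesis using \<open>i = Suc i'\<close> assms(1) i j ij unfolding pdisj_def by auto
    qed
  qed
qed

lemma walk_cons:
  "walk A E (x # p) \<longleftrightarrow> x \<in> A \<and> (p = [] \<or> (E x (hd p) \<and> walk A E p))"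
proof (cases p)
  case Nil
  then show ?thesis by (auto simp: walk_def)
next
  case (Cons y q)
  have "(\<forall>i. Suc i < length (x#y#q) \<longrightarrow> E ((x#y#q)!i) ((x#y#q)!Suc i)) \<longleftrightarrow>
        E x y \<and> (\<forall>i. Suc i < length (y#q) \<longrightarrow> E ((y#q)!i) ((y#q)!Suc i))"
    (is "?L \<longleftrightarrow> ?R")
  proof
    assume ?L
    then show ?R by (metis Suc_less_eq length_Cons nth_Cons_0 nth_Cons_Suc zero_less_Suc)
  next
    assume ?R
    show ?L
    proof (intro allI impI)
      fix i assume "Suc i < length (x#y#q)"
      then show "E ((x#y#q)!i) ((x#y#q)!Suc i)" using \<open>?R\<close> by (cases i) auto
    qed
  qed
  then show ?thesis using Cons by (auto simp: walk_def)
qed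



lemma walk_rtranclp: "walk A E p \<Longrightarrow> (rel_in A E)\<^sup>*\<^sup>* (hd p) (last p)"
proof (induction p)
  case Nil
  then show ?case by (simp add: walk_def)
next
  case (Cons x p)
  show ?case
  proof (cases p)
    case Nil
    then show ?thesis by simp
  next
    case (Cons y q)
    then have "walk A E p" "E x y" "x \<in> A" using Cons.prems by (auto simp: walk_cons)
    moreover have "y \<in> A" using \<open>walk A E p\<close> Cons by (auto simp: walk_def)
    ultimately show ?thesis using Cons.IH Cons
      by (auto simp: rel_in_def intro: converse_rtranclp_into_rtranclp)
  qed
qed

lemma walk_drop: "walk A E p \<Longrightarrow> i < length p \<Longrightarrow> walk A E (drop i p)"
proof -
  assume w: "walk A E p" and i: "i < length p"
  have "set (drop i p) \<subseteq> set p" by (rule set_drop_subset)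
  moreover have "drop i p \<noteq> []" using i by simp
  moreover have "E (drop i p ! k) (drop i p ! Suc k)" if "Suc k < length (drop i p)" for k
  proof -
    have "Suc (i + k) < length p" using that by simp
    then have "E (p ! (i+k)) (p ! Suc (i+k))" using w unfolding walk_def by blast
    then show ?thesis using i by simp
  qed
  ultimately show ?thesis using w unfolding walk_def by blast
qed

lemma rtranclp_path:
  "(rel_in A E)\<^sup>*\<^sup>* x y \<Longrightarrow> x \<in> A \<Longrightarrow> \<exists>p. walk A E p \<and> distinct p \<and> hd p = x \<and> last p = y"
proof (induction rule: converse_rtranclp_induct)
  case base
  then show ?case by (intro exI[of _ "[y]"]) (auto simp: walk_def)
next
  case (step x z)
  then have "z \<in> A" "E x z" by (auto simp: rel_in_def)
  then obtain p where p: "walk A E p" "distinct p" "hd p = z" "last p = y" using step by blast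
  show ?case
  proof (cases "x \<in> set p")
    case True
    then obtain i where i: "i < length p" "p!i = x" by (auto simp: in_set_conv_nth)
    show ?thesis
      by (intro exI[of _ "drop i p"]) (use i p in \<open>auto simp: walk_drop hd_drop_conv_nth\<close>)
  next
    case False
    have "p \<noteq> []" using p by (auto simp: walk_def)
    then show ?thesis using False p step \<open>E x z\<close>
      by (intro exI[of _ "x # p"]) (auto simp: walk_cons)
  qed
qed



lemma walk_mono: "walk A E p \<Longrightarrow> A \<subseteq> B \<Longrightarrow> (\<forall>a b. E a b \<longrightarrow> E2 a b) \<Longrightarrow> walk B E2 p"
  unfolding walk_def by auto

lemma rtranclp_sym:
  assumes "\<forall>a b. E a b \<longrightarrow> E b a"
  shows "(rel_in A E)\<^sup>*\<^sup>* x y \<Longrightarrow> (rel_in A E)\<^sup>*\<^sup>* y x"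
proof (induction rule: rtranclp_induct)
  case base then show ?case by simp
next
  case (step y z)
  then have "rel_in A E z y" using assms by (auto simp: rel_in_def)
  then show ?case using step by (auto intro: converse_rtranclp_into_rtranclp)
qed

lemma rtranclp_restrict:
  "(rel_in A E)\<^sup>*\<^sup>* a x \<Longrightarrow> (rel_in {y. (rel_in A E)\<^sup>*\<^sup>* a y} E)\<^sup>*\<^sup>* a x"
proof (induction rule: rtranclp_induct)
  case base then show ?case by simp
next
  case (step y z)
  have "(rel_in A E)\<^sup>*\<^sup>* a z" using step(1,2) by (rule rtranclp.rtrancl_into_rtrancl)
  moreover have "E y z" using step(2) by (simp add: rel_in_def)
  ultimately have "rel_in {y. (rel_in A E)\<^sup>*\<^sup>* a y} E y z"
    using step(1) unfolding rel_in_def[of "{y. (rel_in A E)\<^sup>*\<^sup>* a y}"] by blast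
  then show ?case using step by auto
qed

lemma rtranclp_in: "(rel_in A E)\<^sup>*\<^sup>* a x \<Longrightarrow> x = a \<or> x \<in> A"
  by (induction rule: rtranclp_induct) (auto simp: rel_in_def)

lemma rel_in_mono: "A \<subseteq> B \<Longrightarrow> (\<forall>a b. a \<in> A \<longrightarrow> b \<in> A \<longrightarrow> E a b \<longrightarrow> E2 a b) \<Longrightarrow>
   (rel_in A E)\<^sup>*\<^sup>* x y \<Longrightarrow> (rel_in B E2)\<^sup>*\<^sup>* x y"
proof -
  assume "A \<subseteq> B" "\<forall>a b. a \<in> A \<longrightarrow> b \<in> A \<longrightarrow> E a b \<longrightarrow> E2 a b"
  then have "rel_in A E \<le> rel_in B E2" by (auto simp: rel_in_def)
  then show "(rel_in A E)\<^sup>*\<^sup>* x y \<Longrightarrow> (rel_in B E2)\<^sup>*\<^sup>* x y"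
    using rtranclp_mono by blast
qed

lemma cover:
  assumes "v \<in> A" shows "(rel_in A E)\<^sup>*\<^sup>* v x \<Longrightarrow>
    x = v \<or> (\<exists>w\<in>A. w \<noteq> v \<and> E v w \<and> (rel_in (A - {v}) E)\<^sup>*\<^sup>* w x)"
proof (induction rule: rtranclp_induct)
  case base then show ?case by simp
next
  case (step y z)
  then have yz: "y \<in> A" "z \<in> A" "E y z" by (auto simp: rel_in_def)
  show ?case
  proof (cases "z = v")
    case True then show ?thesis by simp
  next
    case False
    show ?thesis
    proof (cases "y = v")
      case True
      then show ?thesis using False yz by auto
    next
      case yv: False
      then obtain w where w: "w \<in> A" "w \<noteq> v" "E v w" "(rel_in (A - {v}) E)\<^sup>*\<^sup>* w y"
        using step by auto
      have "rel_in (A - {v}) E y z" using yz yv False by (auto simp: rel_in_def)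
      then show ?thesis using w by (meson rtranclp.rtrancl_into_rtrancl)
    qed
  qed
qed



definition edges :: "'a set \<Rightarrow> ('a \<Rightarrow> 'a \<Rightarrow> bool) \<Rightarrow> ('a \<times> 'a) set" where
  "edges V E = {(a,b). a \<in> V \<and> b \<in> V \<and> E a b}"

lemma goodp_mono:
  assumes "goodp V' E' S' p" "V' \<subseteq> V" "\<forall>a b. E' a b \<longrightarrow> E a b" "S' \<subseteq> S"
  shows "goodp V E S p"
  using assms walk_mono[of V' E' p V E] unfolding goodp_def path_def by auto

lemma main:
  fixes D :: nat and V :: "'a set" and E :: "'a \<Rightarrow> 'a \<Rightarrow> bool" and S :: "'a set"
  assumes D: "D \<ge> 1"
  shows "graph V E \<Longrightarrow> (\<forall>x\<in>V. \<forall>y\<in>V. (rel_in V E)\<^sup>*\<^sup>* x y) \<Longrightarrow> (\<forall>v\<in>V. degree V E v \<le> D)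
     \<Longrightarrow> S \<subseteq> V \<Longrightarrow>
     \<exists>Ps. (\<forall>p\<in>set Ps. goodp V E S p) \<and> pdisj Ps \<and> card S \<le> D * length Ps + 1"
proof (induction "card (edges V E) + card V" arbitrary: V E S rule: less_induct)
  case less
  note G = less.prems(1) and conn = less.prems(2) and deg = less.prems(3) and SV = less.prems(4)
  have finV: "finite V" and Ein: "\<And>a b. E a b \<Longrightarrow> a \<in> V \<and> b \<in> V"
    and Esym: "\<And>a b. E a b \<Longrightarrow> E b a" and Eirr: "\<And>a. \<not> E a a"
    using G unfolding graph_def by blast+
  have Esym': "\<forall>a b. E a b \<longrightarrow> E b a" using Esym by blast
  have finE: "finite (edges V E)"
    by (rule finite_subset[of _ "V \<times> V"]) (auto simp: edges_def finV)
  have finS: "finite S" using SV finV finite_subset by blast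
  show ?case
  proof (cases "\<exists>u v w. E u v \<and> E v w \<and> w \<noteq> u \<and> (rel_in (V-{v}) E)\<^sup>*\<^sup>* w u")
    case True
    then obtain u v w where uvw: "E u v" "E v w" "w \<noteq> u" "(rel_in (V-{v}) E)\<^sup>*\<^sup>* w u"
      by blast
    define E' where "E' = (\<lambda>a b. E a b \<and> \<not>(a = u \<and> b = v) \<and> \<not>(a = v \<and> b = u))"
    have G': "graph V E'" unfolding graph_def E'_def using finV Ein Esym Eirr by blast
    have E'sym: "\<forall>a b. E' a b \<longrightarrow> E' b a" unfolding E'_def using Esym by blast
    have vu: "(rel_in V E')\<^sup>*\<^sup>* v u"
    proof -
      have "u \<noteq> v" using uvw Eirr by auto
      have "w \<noteq> v" using uvw Eirr by auto
      then have "rel_in V E' v w" using uvw Ein \<open>u \<noteq> v\<close> unfolding rel_in_def E'_def by auto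
      moreover have "(rel_in V E')\<^sup>*\<^sup>* w u"
        by (rule rel_in_mono[OF _ _ uvw(4)]) (auto simp: E'_def)
      ultimately show ?thesis by (rule converse_rtranclp_into_rtranclp)
    qed
    have uv: "(rel_in V E')\<^sup>*\<^sup>* u v" using rtranclp_sym[OF E'sym vu] .
    have lift: "(rel_in V E')\<^sup>*\<^sup>* x y" if "(rel_in V E)\<^sup>*\<^sup>* x y" for x y
      using that
    proof (induction rule: rtranclp_induct)
      case base then show ?case by simp
    next
      case (step y z)
      show ?case
      proof (cases "E' y z")
        case True
        then have "rel_in V E' y z" using step(2) by (auto simp: rel_in_def)
        then show ?thesis using step(3) by simp
      next
        case False
        then have "(y = u \<and> z = v) \<or> (y = v \<and> z = u)" using step(2) by (auto simp: rel_in_def E'_def)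
        then have "(rel_in V E')\<^sup>*\<^sup>* y z" using uv vu by auto
        then show ?thesis using step(3) by simp
      qed
    qed
    have conn': "\<forall>x\<in>V. \<forall>y\<in>V. (rel_in V E')\<^sup>*\<^sup>* x y" using conn lift by blast
    have deg': "\<forall>x\<in>V. degree V E' x \<le> D"
    proof
      fix x assume "x \<in> V"
      have "degree V E' x \<le> degree V E x" unfolding degree_def
        by (rule card_mono) (auto simp: finV E'_def)
      then show "degree V E' x \<le> D" using deg \<open>x \<in> V\<close> by auto
    qed
    have lt: "card (edges V E') < card (edges V E)"
    proof (rule psubset_card_mono[OF finE])
      have "(u,v) \<in> edges V E" "(u,v) \<notin> edges V E'" using uvw Ein by (auto simp: edges_def E'_def)
      moreover have "edges V E' \<subseteq> edges V E" by (auto simp: edges_def E'_def)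
      ultimately show "edges V E' \<subset> edges V E" by blast
    qed
    obtain Ps where Ps: "\<forall>p\<in>set Ps. goodp V E' S p" "pdisj Ps" "card S \<le> D * length Ps + 1"
      using less.hyps[of V E' S] lt G' conn' deg' SV by auto
    have EE: "\<forall>a b. E' a b \<longrightarrow> E a b" by (simp add: E'_def)
    have "goodp V E S p" if "p \<in> set Ps" for p
      using goodp_mono[OF Ps(1)[rule_format, OF that] subset_refl EE subset_refl] .
    then have "\<forall>p\<in>set Ps. goodp V E S p" by blast
    then show ?thesis using Ps by blast
  next
    case False
    hence tree: "\<And>u v w. E u v \<Longrightarrow> E v w \<Longrightarrow> w \<noteq> u \<Longrightarrow> \<not> (rel_in (V-{v}) E)\<^sup>*\<^sup>* w u"
      by blast
    define C where "C u v = {x. (rel_in (V-{u}) E)\<^sup>*\<^sup>* v x}" for u v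
    have Csub: "C u v \<subseteq> insert v (V - {u})" for u v
    proof
      fix x assume "x \<in> C u v"
      then have "(rel_in (V-{u}) E)\<^sup>*\<^sup>* v x" by (simp add: C_def)
      from rtranclp_in[OF this] show "x \<in> insert v (V-{u})" by blast
    qed
    have finC: "finite (C u v)" for u v using finV finite_subset[OF Csub] by auto
    show ?thesis
    proof (cases "\<exists>u v. E u v \<and> 2 \<le> card (S \<inter> C u v)")
      case True
      then obtain uv0 where "(\<lambda>(u,v). E u v \<and> 2 \<le> card (S \<inter> C u v)) uv0" by auto
      from ex_has_least_nat[of "\<lambda>(u,v). E u v \<and> 2 \<le> card (S \<inter> C u v)" uv0 "\<lambda>(u,v). card (C u v)", OF this]
      obtain uv1 where h: "(\<lambda>(u,v). E u v \<and> 2 \<le> card (S \<inter> C u v)) uv1"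
         "\<forall>y. (\<lambda>(u,v). E u v \<and> 2 \<le> card (S \<inter> C u v)) y \<longrightarrow> (\<lambda>(u,v). card (C u v)) uv1 \<le> (\<lambda>(u,v). card (C u v)) y"
        by blast
      obtain u v where uv1: "uv1 = (u,v)" by (cases uv1)
      have uv: "E u v" "2 \<le> card (S \<inter> C u v)" using h(1) uv1 by auto
      have minC: "card (C u v) \<le> card (C u' v')" if "E u' v'" "2 \<le> card (S \<inter> C u' v')" for u' v'
        using h(2)[rule_format, of "(u',v')"] that uv1 by simp
      have uV: "u \<in> V" and vV: "v \<in> V" and unv: "u \<noteq> v" using uv Ein Eirr by auto
      have vC: "v \<in> C u v" by (simp add: C_def)
      have uC: "u \<notin> C u v" using Csub[of u v] unv by auto
      have sub: "C v w \<subset> C u v" if "E v w" "w \<noteq> u" for w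
      proof -
        have "C v w \<subseteq> C u v"
        proof
          fix x assume "x \<in> C v w"
          hence "(rel_in (V-{v}) E)\<^sup>*\<^sup>* w x" by (simp add: C_def)
          then show "x \<in> C u v"
          proof (induction rule: rtranclp_induct)
            case base
            have "rel_in (V-{u}) E v w" using that Ein uv unv unfolding rel_in_def by auto
            then show ?case by (simp add: C_def)
          next
            case (step y z)
            have "z \<noteq> u"
            proof
              assume "z = u"
              then have "(rel_in (V-{v}) E)\<^sup>*\<^sup>* w u" using step(1,2) by simp
              then show False using tree[OF uv(1) that(1) that(2)] by simp
            qed
            moreover have "y \<noteq> u" using step.IH uC by auto
            ultimately have "rel_in (V-{u}) E y z" using step(2) by (auto simp: rel_in_def)
            moreover have "(rel_in (V-{u}) E)\<^sup>*\<^sup>* v y" using step.IH by (simp add: C_def)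
            ultimately show ?case by (simp add: C_def)
          qed
        qed
        moreover have "v \<notin> C v w" using Csub[of v w] Eirr that by auto
        ultimately show ?thesis using vC by blast
      qed
      have le1: "card (S \<inter> C v w) \<le> 1" if "E v w" "w \<noteq> u" for w
      proof (rule ccontr)
        assume "\<not> card (S \<inter> C v w) \<le> 1"
        hence "2 \<le> card (S \<inter> C v w)" by simp
        from minC[OF that(1) this] have "card (C u v) \<le> card (C v w)" .
        moreover have "card (C v w) < card (C u v)" using psubset_card_mono[OF finC sub[OF that]] .
        ultimately show False by simp
      qed
      define N where "N = {w\<in>V. E v w} - {u}"
      have finN: "finite N" using finV by (auto simp: N_def)
      have cardN: "card N + 1 \<le> D"
      proof -
        have "u \<in> {w\<in>V. E v w}" using uV uv Esym by blast
        then have "card N = degree V E v - 1" unfolding N_def degree_def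
          by (simp add: card_Diff_singleton)
        moreover have "degree V E v \<ge> 1" unfolding degree_def
          using \<open>u \<in> {w\<in>V. E v w}\<close> finV by (auto simp: Suc_le_eq card_gt_0_iff)
        ultimately show ?thesis using deg vV by auto
      qed
      have cov: "C u v \<subseteq> insert v (\<Union>w\<in>N. C v w)"
      proof
        fix x assume "x \<in> C u v"
        then have "(rel_in (V-{u}) E)\<^sup>*\<^sup>* v x" by (simp add: C_def)
        from cover[OF _ this] vV unv
        have "x = v \<or> (\<exists>w\<in>V-{u}. w \<noteq> v \<and> E v w \<and> (rel_in (V - {u} - {v}) E)\<^sup>*\<^sup>* w x)" by auto
        then show "x \<in> insert v (\<Union>w\<in>N. C v w)"
        proof
          assume "\<exists>w\<in>V-{u}. w \<noteq> v \<and> E v w \<and> (rel_in (V - {u} - {v}) E)\<^sup>*\<^sup>* w x"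
          then obtain w where w: "w \<in> V-{u}" "E v w" "(rel_in (V - {u} - {v}) E)\<^sup>*\<^sup>* w x" by blast
          have "(rel_in (V - {v}) E)\<^sup>*\<^sup>* w x" by (rule rel_in_mono[OF _ _ w(3)]) auto
          then show ?thesis using w by (auto simp: C_def N_def)
        qed simp
      qed
      have cardSC: "card (S \<inter> C u v) \<le> D"
      proof -
        have "S \<inter> C u v \<subseteq> (S \<inter> {v}) \<union> (\<Union>w\<in>N. S \<inter> C v w)" using cov by auto
        hence "card (S \<inter> C u v) \<le> card ((S \<inter> {v}) \<union> (\<Union>w\<in>N. S \<inter> C v w))"
          by (intro card_mono) (auto simp: finN finC)
        also have "\<dots> \<le> card (S \<inter> {v}) + card (\<Union>w\<in>N. S \<inter> C v w)" by (rule card_Un_le)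
        also have "card (S \<inter> {v}) \<le> 1" by (rule order_trans[OF card_mono[of "{v}"]]) auto
        also have "card (\<Union>w\<in>N. S \<inter> C v w) \<le> (\<Sum>w\<in>N. card (S \<inter> C v w))" by (rule card_UN_le[OF finN])
        also have "\<dots> \<le> (\<Sum>w\<in>N. 1)" by (rule sum_mono) (use le1 in \<open>auto simp: N_def\<close>)
        finally show ?thesis using cardN by simp
      qed
      have finSC: "finite (S \<inter> C u v)" using finC by auto
      have "\<not> (\<forall>a\<in>S \<inter> C u v. \<forall>b\<in>S \<inter> C u v. a = b)" using uv(2) card_le_Suc0_iff_eq[OF finSC] by simp
      then obtain s1 s2 where s: "s1 \<in> S \<inter> C u v" "s2 \<in> S \<inter> C u v" "s1 \<noteq> s2" by blast
      have rC: "(rel_in (C u v) E)\<^sup>*\<^sup>* v s" if "s \<in> C u v" for s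
      proof -
        have "(rel_in (V-{u}) E)\<^sup>*\<^sup>* v s" using that by (simp add: C_def)
        from rtranclp_restrict[OF this] show ?thesis by (simp add: C_def)
      qed
      have "(rel_in (C u v) E)\<^sup>*\<^sup>* s1 s2"
        using rtranclp_trans[OF rtranclp_sym[OF Esym' rC] rC] s by blast
      then obtain p where p: "walk (C u v) E p" "distinct p" "hd p = s1" "last p = s2"
        using rtranclp_path[OF \<open>(rel_in (C u v) E)\<^sup>*\<^sup>* s1 s2\<close>] s by blast
      have CV: "C u v \<subseteq> V" using Csub vV by auto
      define V' where "V' = V - C u v"
      define E' where "E' = (\<lambda>a b. E a b \<and> a \<in> V' \<and> b \<in> V')"
      have G': "graph V' E'" unfolding graph_def E'_def using finV Ein Esym Eirr by (simp add: V'_def)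
      have uV': "u \<in> V'" using uV uC by (simp add: V'_def)
      have reach: "x \<notin> C u v \<longrightarrow> (rel_in V' E')\<^sup>*\<^sup>* u x" if "(rel_in V E)\<^sup>*\<^sup>* u x" for x
        using that
      proof (induction rule: rtranclp_induct)
        case base show ?case by simp
      next
        case (step y z)
        show ?case
        proof
          assume zC: "z \<notin> C u v"
          have yz: "y \<in> V" "z \<in> V" "E y z" using step(2) by (auto simp: rel_in_def)
          show "(rel_in V' E')\<^sup>*\<^sup>* u z"
          proof (cases "y \<in> C u v")
            case True
            have "z = u"
            proof (rule ccontr)
              assume "z \<noteq> u"
              have "y \<noteq> u" using True uC by auto
              hence "rel_in (V-{u}) E y z" using yz \<open>z \<noteq> u\<close> by (auto simp: rel_in_def)
              moreover have "(rel_in (V-{u}) E)\<^sup>*\<^sup>* v y" using True by (simp add: C_def)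
              ultimately have "z \<in> C u v" by (simp add: C_def)
              with zC show False by simp
            qed
            then show ?thesis by simp
          next
            case False
            hence "(rel_in V' E')\<^sup>*\<^sup>* u y" using step(3) by simp
            moreover have "rel_in V' E' y z" using yz False zC by (auto simp: rel_in_def E'_def V'_def)
            ultimately show ?thesis by (rule rtranclp.rtrancl_into_rtrancl)
          qed
        qed
      qed
      have E'sym: "\<forall>a b. E' a b \<longrightarrow> E' b a" unfolding E'_def using Esym by blast
      have conn': "\<forall>x\<in>V'. \<forall>y\<in>V'. (rel_in V' E')\<^sup>*\<^sup>* x y"
      proof (intro ballI)
        fix x y assume "x \<in> V'" "y \<in> V'"
        then have "(rel_in V' E')\<^sup>*\<^sup>* u x" "(rel_in V' E')\<^sup>*\<^sup>* u y"
          using reach conn uV by (auto simp: V'_def)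
        then show "(rel_in V' E')\<^sup>*\<^sup>* x y" by (rule rtranclp_trans[OF rtranclp_sym[OF E'sym]])
      qed
      have deg': "\<forall>x\<in>V'. degree V' E' x \<le> D"
      proof
        fix x assume "x \<in> V'"
        have "degree V' E' x \<le> degree V E x" unfolding degree_def
          by (rule card_mono) (auto simp: finV E'_def V'_def)
        then show "degree V' E' x \<le> D" using deg \<open>x \<in> V'\<close> by (auto simp: V'_def)
      qed
      have lt: "card (edges V' E') + card V' < card (edges V E) + card V"
      proof -
        have "card (edges V' E') \<le> card (edges V E)"
          by (rule card_mono[OF finE]) (auto simp: edges_def E'_def V'_def)
        moreover have "card V' < card V"
          by (rule psubset_card_mono[OF finV]) (use vC vV in \<open>auto simp: V'_def\<close>)
        ultimately show ?thesis by simp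
      qed
      have VV0: "S - C u v \<subseteq> V'" using SV by (auto simp: V'_def)
      obtain Ps where Ps: "\<forall>p\<in>set Ps. goodp V' E' (S - C u v) p" "pdisj Ps"
          "card (S - C u v) \<le> D * length Ps + 1"
        using less.hyps[OF lt G' conn' deg', of "S - C u v"] SV VV0 by blast
      have EE: "\<forall>a b. E' a b \<longrightarrow> E a b" by (simp add: E'_def)
      have VV: "V' \<subseteq> V" "S - C u v \<subseteq> S" by (auto simp: V'_def)
      have "goodp V E S q" if "q \<in> set Ps" for q
        using goodp_mono[OF Ps(1)[rule_format, OF that] VV(1) EE VV(2)] .
      then have g1: "\<forall>q\<in>set Ps. goodp V E S q" by blast
      have g0: "goodp V E S p" using p s CV walk_mono[OF p(1) CV, of E]
        unfolding goodp_def path_def by auto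
      have "set p \<subseteq> C u v" using p(1) by (simp add: walk_def)
      moreover have "set q \<subseteq> V'" if "q \<in> set Ps" for q
        using Ps(1) that by (auto simp: goodp_def path_def walk_def)
      ultimately have "\<forall>q\<in>set Ps. set p \<inter> set q = {}" by (auto simp: V'_def)
      then have dj: "pdisj (p # Ps)" using disj_Cons Ps(2) by blast
      have "card S = card (S \<inter> C u v) + card (S - C u v)" using card_Int_Diff[OF finS] .
      then have "card S \<le> D * length (p # Ps) + 1" using cardSC Ps(3) by simp
      then show ?thesis using g0 g1 dj by (intro exI[of _ "p # Ps"]) auto
    next
      case False
      have small: "card (S \<inter> C u v) \<le> 1" if "E u v" for u v
      proof -
        have "\<not> 2 \<le> card (S \<inter> C u v)" using False that by blast
        then show ?thesis by simp
      qed
      show ?thesis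
      proof (cases "card S \<le> 1")
        case True
        then show ?thesis by (intro exI[of _ "[]"]) (auto simp: pdisj_def)
      next
        case False
        have "\<not> (\<forall>a\<in>S. \<forall>b\<in>S. a = b)" using False card_le_Suc0_iff_eq[OF finS] by simp
        then obtain s1 s2 where s: "s1 \<in> S" "s2 \<in> S" "s1 \<noteq> s2" by blast
        have s1V: "s1 \<in> V" and s2V: "s2 \<in> V" using s SV by auto
        define N where "N = {w\<in>V. E s1 w}"
        have finN: "finite N" using finV by (auto simp: N_def)
        have cov: "V \<subseteq> insert s1 (\<Union>w\<in>N. C s1 w)"
        proof
          fix x assume "x \<in> V"
          then have "(rel_in V E)\<^sup>*\<^sup>* s1 x" using conn s1V by blast
          from cover[OF s1V this]
          show "x \<in> insert s1 (\<Union>w\<in>N. C s1 w)" by (auto simp: C_def N_def)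
        qed
        have "card S \<le> D + 1"
        proof -
          have "S \<subseteq> (S \<inter> {s1}) \<union> (\<Union>w\<in>N. S \<inter> C s1 w)" using cov SV by auto
          hence "card S \<le> card ((S \<inter> {s1}) \<union> (\<Union>w\<in>N. S \<inter> C s1 w))"
            by (intro card_mono) (auto simp: finN finC)
          also have "\<dots> \<le> card (S \<inter> {s1}) + card (\<Union>w\<in>N. S \<inter> C s1 w)" by (rule card_Un_le)
          also have "card (S \<inter> {s1}) \<le> 1" by (rule order_trans[OF card_mono[of "{s1}"]]) auto
          also have "card (\<Union>w\<in>N. S \<inter> C s1 w) \<le> (\<Sum>w\<in>N. card (S \<inter> C s1 w))" by (rule card_UN_le[OF finN])
          also have "\<dots> \<le> (\<Sum>w\<in>N. 1)" by (rule sum_mono) (use small in \<open>auto simp: N_def\<close>)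
          also have "(\<Sum>w\<in>N. 1::nat) = degree V E s1" by (simp add: N_def degree_def)
          finally have "card S \<le> Suc (degree V E s1)" by simp
          moreover have "degree V E s1 \<le> D" using deg s1V by blast
          ultimately show ?thesis by linarith
        qed
        obtain p where p: "walk V E p" "distinct p" "hd p = s1" "last p = s2"
          using rtranclp_path[of V E s1 s2] conn s1V s2V by blast
        have g0: "goodp V E S p" using p s unfolding goodp_def path_def by auto
        have dj: "pdisj [p]" by (auto simp: pdisj_def)
        show ?thesis using g0 dj \<open>card S \<le> D + 1\<close> by (intro exI[of _ "[p]"]) auto
      qed
    qed
  qed
qed


theorem lemma6p3:
  fixes V :: "'a set" and E :: "'a \<Rightarrow> 'a \<Rightarrow> bool" and D :: nat and S :: "'a set"
  assumes "D \<ge> 1"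
    and "connected_graph V E"
    and "\<forall>v\<in>V. degree V E v \<le> D"
    and "S \<subseteq> V"
  shows "\<exists>Ps :: 'a list list.
           (\<forall>p\<in>set Ps. path V E p \<and> hd p \<noteq> last p \<and> hd p \<in> S \<and> last p \<in> S) \<and>
           (\<forall>i<length Ps. \<forall>j<length Ps. i \<noteq> j \<longrightarrow> set (Ps ! i) \<inter> set (Ps ! j) = {}) \<and>
           int (length Ps) \<ge> \<lceil>(real (card S) - 1) / real D\<rceil>"
proof -
  have G: "graph V E" using assms(2) unfolding connected_graph_def by blast
  have conn: "\<forall>x\<in>V. \<forall>y\<in>V. (rel_in V E)\<^sup>*\<^sup>* x y"
  proof (intro ballI)
    fix x y assume "x \<in> V" "y \<in> V"
    then obtain p where "walk V E p" "hd p = x" "last p = y"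
      using assms(2) unfolding connected_graph_def by blast
    then show "(rel_in V E)\<^sup>*\<^sup>* x y" using walk_rtranclp by metis
  qed
  obtain Ps where Ps: "\<forall>p\<in>set Ps. goodp V E S p" "pdisj Ps" "card S \<le> D * length Ps + 1"
    using main[OF assms(1) G conn assms(3) assms(4)] by blast
  have "real (card S) \<le> real D * real (length Ps) + 1"
    using Ps(3) by (metis of_nat_add of_nat_le_iff of_nat_mult of_nat_1)
  then have "(real (card S) - 1) / real D \<le> real (length Ps)"
    using assms(1) by (simp add: divide_le_eq mult.commute)
  then have "\<lceil>(real (card S) - 1) / real D\<rceil> \<le> int (length Ps)"
    by (simp add: ceiling_le_iff)
  then show ?thesis using Ps(1,2) unfolding goodp_def pdisj_def by blast
qed

end
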